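(* Let $B$ be a connected building set on $V=[n]$. Then $$F(P_B)=\sum_{\alpha\models n}\zeta_\alpha(B)M_\alpha,$$ where $\zeta_\alpha(B)$ is the number of splitting chains of $B$ of type $\alpha$.
   Context: A building set on a finite set $V$ is a collection $B$ of nonempty subsets of $V$ such that $\{v\}\in B$ for all $v\in V$ and such that $I,J\in B$, $I\cap J\neq\emptyset$ imply $I\cup J\in B$. It is connected if $V\in B$, and discrete if it consists only of the singletons. For $I\subseteq V$, the restriction is $B|_I=\{J\in B: J\subseteq I\}$ (a building set on $I$) and the contraction is $B/I=\{J\subseteq V\setminus I: J\neq\emptyset,\ J\in B\text{ or }J\cup I'\in B\text{ for some }I'\subseteq I\}$ (a building set on $V\setminus I$). The nestohedron of $B$ is the Minkowski sum $P_B=\sum_{I\in B}\mathrm{Conv}\{e_i: i\in I\}\subset\mathbb{R}^V$. For a convex polytope $Q\subset\mathbb{R}^V$, a function $f:V\to\mathbb{N}=\{1,2,\dots\}$ is $Q$-generic if the linear functional $x\mapsto\sum_{v\in V}f(v)x_v$ attains its maximum over $Q$ at a unique point. Set $F(Q)=\sum_{f\ Q\text{-generic}}\prod_{v\in V}x_{f(v)}$, a formal power series in commuting variables $x_1,x_2,\dots$. For a composition $\alpha=(a_1,\dots,a_k)$ of $n$ (written $\alpha\models n$; $k(\alpha)=k$ is its length), $M_\alpha=\sum_{i_1<\dots<i_k}x_{i_1}^{a_1}\cdots x_{i_k}^{a_k}$ is the monomial quasisymmetric function, with $M_{()}=1$. A splitting chain of $B$ of type $\alpha=(a_1,\dots,a_k)\models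 n$ is a chain $\emptyset=I_0\subsetneq I_1\subsetneq\cdots\subsetneq I_k=V$ such that for every $1\le j\le k$ the building set $(B|_{I_j})/I_{j-1}$ (on $I_j\setminus I_{j-1}$) is discrete and $|I_j\setminus I_{j-1}|=a_j$. *)

theory Defs
  imports "HOL-Analysis.Analysis" "HOL-Library.Set_Algebras"
begin

definition building_set :: "'a set \<Rightarrow> 'a set set \<Rightarrow> bool" where
  "building_set V B \<longleftrightarrow> B \<subseteq> Pow V \<and> (\<forall>I\<in>B. I \<noteq> {}) \<and> (\<forall>v\<in>V. {v} \<in> B)
     \<and> (\<forall>I\<in>B. \<forall>J\<in>B. I \<inter> J \<noteq> {} \<longrightarrow> I \<union> J \<in> B)"

definition connected_bs :: "'a set \<Rightarrow> 'a set set \<Rightarrow> bool" where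
  "connected_bs V B \<longleftrightarrow> V \<in> B"

definition discrete_bs :: "'a set \<Rightarrow> 'a set set \<Rightarrow> bool" where
  "discrete_bs V B \<longleftrightarrow> B = {{v} | v. v \<in> V}"

definition restr_bs :: "'a set set \<Rightarrow> 'a set \<Rightarrow> 'a set set" where
  "restr_bs B I = {J \<in> B. J \<subseteq> I}"

definition contr_bs :: "'a set \<Rightarrow> 'a set set \<Rightarrow> 'a set \<Rightarrow> 'a set set" where
  "contr_bs V B I = {J. J \<subseteq> V - I \<and> J \<noteq> {} \<and> (J \<in> B \<or> (\<exists>I'\<subseteq>I. J \<union> I' \<in> B))}"

definition nestohedron :: "('a::finite) set set \<Rightarrow> (real ^ 'a) set" where
  "nestohedron B = (\<Sum>I\<in>B. convex hull ((\<lambda>i. axis i 1) ` I))"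

definition generic :: "(real ^ ('a::finite)) set \<Rightarrow> ('a \<Rightarrow> nat) \<Rightarrow> bool" where
  "generic Q f \<longleftrightarrow> (\<forall>v. f v \<ge> 1) \<and>
     (\<exists>!x. x \<in> Q \<and> (\<forall>y\<in>Q. (\<Sum>v\<in>UNIV. real (f v) * y $ v) \<le> (\<Sum>v\<in>UNIV. real (f v) * x $ v)))"

(* Formal power series in x_1, x_2, ... with natural coefficients are represented by
   their coefficient functions: a monomial x_1^{m 1} x_2^{m 2} ... is the exponent
   function m :: nat => nat (x_0 does not exist, so monomials have m 0 = 0). *)
type_synonym qsym = "(nat \<Rightarrow> nat) \<Rightarrow> nat"

(* F(Q) = sum over Q-generic f of prod_v x_{f v}; coefficient of m counts the generic f
   whose monomial is m *)
definition F_series :: "(real ^ ('a::finite)) set \<Rightarrow> qsym" where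
  "F_series Q m = card {f. generic Q f \<and> (\<forall>i. card {v. f v = i} = m i)}"

definition compositions :: "nat \<Rightarrow> nat list set" where
  "compositions n = {\<alpha>. (\<forall>a\<in>set \<alpha>. a > 0) \<and> sum_list \<alpha> = n}"

(* monomial quasisymmetric function M_alpha = sum_{i_1<...<i_k} x_{i_1}^{a_1}...x_{i_k}^{a_k} *)
definition monomial_qsym :: "nat list \<Rightarrow> qsym" where
  "monomial_qsym \<alpha> m = (if \<exists>idx :: nat list. sorted_wrt (<) idx \<and> length idx = length \<alpha>
        \<and> (\<forall>j<length \<alpha>. idx ! j \<ge> 1 \<and> m (idx ! j) = \<alpha> ! j)
        \<and> (\<forall>i. i \<notin> set idx \<longrightarrow> m i = 0) then 1 else 0)"

definition splitting_chain :: "'a set \<Rightarrow> 'a set set \<Rightarrow> nat list \<Rightarrow> 'a set list \<Rightarrow> bool" where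
  "splitting_chain V B \<alpha> Is \<longleftrightarrow> length Is = length \<alpha> + 1 \<and> Is ! 0 = {} \<and> Is ! length \<alpha> = V
     \<and> (\<forall>j\<in>{1..length \<alpha>}. Is ! (j - 1) \<subset> Is ! j
          \<and> discrete_bs (Is ! j - Is ! (j - 1)) (contr_bs (Is ! j) (restr_bs B (Is ! j)) (Is ! (j - 1)))
          \<and> card (Is ! j - Is ! (j - 1)) = \<alpha> ! (j - 1))"

definition zeta :: "'a set \<Rightarrow> 'a set set \<Rightarrow> nat list \<Rightarrow> nat" where
  "zeta V B \<alpha> = card {Is. splitting_chain V B \<alpha> Is}"

end

theory Submission
  imports Defs
begin

definition smax :: "'a set \<Rightarrow> ('a \<Rightarrow> nat) \<Rightarrow> bool" where
  "smax K p \<longleftrightarrow> (\<exists>v\<in>K. \<forall>w\<in>K. w \<noteq> v \<longrightarrow> p w < p v)"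

definition Lf :: "('a::finite \<Rightarrow> nat) \<Rightarrow> real ^ 'a \<Rightarrow> real" where
  "Lf f y = (\<Sum>v\<in>UNIV. real (f v) * y $ v)"

definition simpT :: "('a::finite) set \<Rightarrow> (real ^ 'a) set" where
  "simpT I = {y. (\<forall>v. 0 \<le> y $ v) \<and> (\<forall>v. v \<notin> I \<longrightarrow> y $ v = 0) \<and> (\<Sum>v\<in>UNIV. y $ v) = 1}"

lemma axis_nth': "(axis i (1::real) :: real ^ 'a) $ v = (if v = i then 1 else 0)"
  by (simp add: axis_def)

lemma convex_simpT: "convex (simpT I)"
  unfolding convex_def simpT_def
proof (intro ballI allI impI, elim CollectE conjE, intro CollectI conjI allI impI)
  fix x y :: "real ^ 'a" and u v :: real and w
  assume h: "\<forall>v. 0 \<le> x $ v" "\<forall>va. va \<notin> I \<longrightarrow> x $ va = 0" "(\<Sum>v\<in>UNIV. x $ v) = 1"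
    "\<forall>v. 0 \<le> y $ v" "\<forall>va. va \<notin> I \<longrightarrow> y $ va = 0" "(\<Sum>v\<in>UNIV. y $ v) = 1"
    and uv: "0 \<le> u" "0 \<le> v" "u + v = 1"
  show "0 \<le> (u *\<^sub>R x + v *\<^sub>R y) $ w" using h uv by simp
  { assume "w \<notin> I" then show "(u *\<^sub>R x + v *\<^sub>R y) $ w = 0" using h by simp }
  have "(\<Sum>w\<in>UNIV. (u *\<^sub>R x + v *\<^sub>R y) $ w) = u * (\<Sum>w\<in>UNIV. x $ w) + v * (\<Sum>w\<in>UNIV. y $ w)"
    by (simp add: sum.distrib sum_distrib_left)
  then show "(\<Sum>w\<in>UNIV. (u *\<^sub>R x + v *\<^sub>R y) $ w) = 1" using h uv by simp
qed

lemma simplex_sub: "convex hull ((\<lambda>i. axis i (1::real)) ` I) \<subseteq> simpT (I :: ('a::finite) set)"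
  by (rule hull_minimal) (auto simp: simpT_def axis_nth' convex_simpT[unfolded simpT_def])

lemma simp_bound:
  assumes "y \<in> simpT I" "\<forall>v\<in>I. f v \<le> c"
  shows "Lf f y \<le> real c"
proof -
  have "Lf f y \<le> (\<Sum>v\<in>UNIV. real c * y $ v)"
    unfolding Lf_def
  proof (rule sum_mono)
    fix v :: 'a
    show "real (f v) * y $ v \<le> real c * y $ v"
      using assms by (cases "v \<in> I") (auto simp: simpT_def intro: mult_right_mono)
  qed
  also have "\<dots> = real c" using assms(1) by (simp add: simpT_def flip: sum_distrib_left)
  finally show ?thesis .
qed

lemma simp_eq:
  assumes y: "y \<in> simpT I" and v0: "v0 \<in> I" and lt: "\<forall>w\<in>I. w \<noteq> v0 \<longrightarrow> f w < f v0"
    and ge: "Lf f y \<ge> real (f v0)"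
  shows "y = axis v0 1"
proof -
  have nn: "\<forall>v. 0 \<le> (real (f v0) - real (f v)) * y $ v"
  proof
    fix v show "0 \<le> (real (f v0) - real (f v)) * y $ v"
      using y lt v0 by (cases "v \<in> I"; cases "v = v0") (auto simp: simpT_def less_imp_le)
  qed
  have "(\<Sum>v\<in>UNIV. (real (f v0) - real (f v)) * y $ v) = real (f v0) * (\<Sum>v\<in>UNIV. y $ v) - Lf f y"
    by (simp add: Lf_def left_diff_distrib sum_subtractf sum_distrib_left)
  also have "\<dots> \<le> 0" using y ge by (simp add: simpT_def)
  finally have "(\<Sum>v\<in>UNIV. (real (f v0) - real (f v)) * y $ v) = 0"
    using nn by (meson antisym sum_nonneg)
  then have z: "\<forall>v. (real (f v0) - real (f v)) * y $ v = 0"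
    using nn by (simp add: sum_nonneg_eq_0_iff)
  have zero: "\<forall>v. v \<noteq> v0 \<longrightarrow> y $ v = 0"
  proof (intro allI impI)
    fix v assume "v \<noteq> v0"
    show "y $ v = 0"
    proof (cases "v \<in> I")
      case True
      then have "real (f v0) - real (f v) \<noteq> 0" using lt \<open>v \<noteq> v0\<close> by auto
      then show ?thesis using z by auto
    next
      case False then show ?thesis using y by (auto simp: simpT_def)
    qed
  qed
  have "(\<Sum>v\<in>UNIV. y $ v) = y $ v0"
  proof -
    have "(\<Sum>v\<in>UNIV. y $ v) = (\<Sum>v\<in>UNIV. if v = v0 then y $ v0 else 0)"
      by (rule sum.cong) (auto simp: zero)
    then show ?thesis by simp
  qed
  then have "y $ v0 = 1" using y by (simp add: simpT_def)
  then show ?thesis using zero by (auto simp: vec_eq_iff axis_nth')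
qed

lemma Lf_sum: "Lf f (sum s A) = (\<Sum>I\<in>A. Lf f (s I))"
  unfolding Lf_def by (simp add: sum_component sum_distrib_left sum.swap[of _ A])

lemma Lf_axis: "Lf f (axis i 1) = real (f i)"
proof -
  have "Lf f (axis i 1) = (\<Sum>v\<in>UNIV. if v = i then real (f i) else 0)"
    unfolding Lf_def by (rule sum.cong) (auto simp: axis_nth')
  then show ?thesis by simp
qed

lemma ex_max: "finite I \<Longrightarrow> I \<noteq> {} \<Longrightarrow> \<exists>v\<in>I. \<forall>w\<in>I. (f::'b\<Rightarrow>nat) w \<le> f v"
proof -
  assume h: "finite I" "I \<noteq> {}"
  then have "Max (f ` I) \<in> f ` I" by simp
  then obtain v where "v \<in> I" "f v = Max (f ` I)" by auto
  moreover have "\<forall>w\<in>I. f w \<le> Max (f ` I)" using h by simp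
  ultimately show ?thesis by metis
qed

lemma nesto_eq: "finite B \<Longrightarrow> nestohedron B = {sum s B |s. \<forall>I\<in>B. s I \<in> convex hull ((\<lambda>i. axis i 1) ` I)}"
  unfolding nestohedron_def by (rule set_sum_alt)

lemma sum_le_eq:
  fixes g h :: "'b \<Rightarrow> real"
  assumes "finite A" "\<forall>I\<in>A. g I \<le> h I" "sum h A \<le> sum g A"
  shows "\<forall>I\<in>A. g I = h I"
proof -
  have "sum (\<lambda>I. h I - g I) A = 0"
    using assms by (simp add: sum_subtractf) (meson antisym sum_mono)
  then have "\<forall>I\<in>A. h I - g I = 0"
    using assms by (subst (asm) sum_nonneg_eq_0_iff) auto
  then show ?thesis by auto
qed

lemma maxpt:
  fixes B :: "('a::finite) set set"
  assumes fin: "finite B" and a: "\<forall>I\<in>B. a I \<in> I \<and> (\<forall>v\<in>I. f v \<le> f (a I))"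
  shows "(\<Sum>I\<in>B. axis (a I) 1) \<in> nestohedron B"
    and "Lf f (\<Sum>I\<in>B. axis (a I) 1) = (\<Sum>I\<in>B. real (f (a I)))"
    and "\<forall>y\<in>nestohedron B. Lf f y \<le> Lf f (\<Sum>I\<in>B. axis (a I) 1)"
proof -
  show "(\<Sum>I\<in>B. axis (a I) 1) \<in> nestohedron B"
    unfolding nesto_eq[OF fin] using a by (auto intro!: hull_inc)
  show L: "Lf f (\<Sum>I\<in>B. axis (a I) 1) = (\<Sum>I\<in>B. real (f (a I)))"
    by (simp add: Lf_sum Lf_axis)
  show "\<forall>y\<in>nestohedron B. Lf f y \<le> Lf f (\<Sum>I\<in>B. axis (a I) 1)"
  proof
    fix y assume "y \<in> nestohedron B"
    then obtain s where y: "y = sum s B" and s: "\<forall>I\<in>B. s I \<in> convex hull ((\<lambda>i. axis i 1) ` I)"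
      unfolding nesto_eq[OF fin] by auto
    have "Lf f y = (\<Sum>I\<in>B. Lf f (s I))" by (simp add: y Lf_sum)
    also have "\<dots> \<le> (\<Sum>I\<in>B. real (f (a I)))"
    proof (rule sum_mono)
      fix I assume "I \<in> B"
      then have "s I \<in> simpT I" using s simplex_sub by blast
      then show "Lf f (s I) \<le> real (f (a I))" using a \<open>I \<in> B\<close> by (intro simp_bound) auto
    qed
    finally show "Lf f y \<le> Lf f (\<Sum>I\<in>B. axis (a I) 1)" using L by simp
  qed
qed

lemma gen_iff:
  fixes B :: "('a::finite) set set"
  assumes bs: "building_set UNIV B"
  shows "generic (nestohedron B) f \<longleftrightarrow> (\<forall>v. f v \<ge> 1) \<and> (\<forall>K\<in>B. smax K f)"
proof -
  have fin: "finite B" by (rule finite_subset[of B "Pow UNIV"]) auto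
  have ne: "\<forall>I\<in>B. I \<noteq> {}" using bs by (simp add: building_set_def)
  let ?Q = "nestohedron B"
  let ?P = "\<lambda>x. x \<in> ?Q \<and> (\<forall>y\<in>?Q. Lf f y \<le> Lf f x)"
  have gen: "generic ?Q f \<longleftrightarrow> (\<forall>v. f v \<ge> 1) \<and> (\<exists>!x. ?P x)"
    unfolding generic_def Lf_def by simp
  show ?thesis
  proof
    assume g: "generic ?Q f"
    then have f1: "\<forall>v. f v \<ge> 1" and ex1: "\<exists>!x. ?P x" using gen by auto
    have "\<forall>I\<in>B. \<exists>v. v \<in> I \<and> (\<forall>w\<in>I. f w \<le> f v)"
      using ex_max ne by (metis finite_subset[OF subset_UNIV] finite)
    then obtain a0 where a0: "\<forall>I\<in>B. a0 I \<in> I \<and> (\<forall>v\<in>I. f v \<le> f (a0 I))"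
      by metis
    have "\<forall>K\<in>B. smax K f"
    proof (rule ballI, rule ccontr)
      fix K assume K: "K \<in> B" and ns: "\<not> smax K f"
      then obtain w where w: "w \<in> K" "w \<noteq> a0 K" "\<not> f w < f (a0 K)"
        using a0 unfolding smax_def by blast
      then have fw: "f w = f (a0 K)" using a0 K by force
      define a1 where "a1 = a0(K := w)"
      have a1: "\<forall>I\<in>B. a1 I \<in> I \<and> (\<forall>v\<in>I. f v \<le> f (a1 I))"
        using a0 w fw by (auto simp: a1_def)
      have p0: "?P (\<Sum>I\<in>B. axis (a0 I) 1)" using maxpt[OF fin a0] by blast
      have p1: "?P (\<Sum>I\<in>B. axis (a1 I) 1)" using maxpt[OF fin a1] by blast
      have eq: "(\<Sum>I\<in>B. axis (a0 I) (1::real)) = (\<Sum>I\<in>B. axis (a1 I) 1)"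
        using ex1 p0 p1 by blast
      have r: "(\<Sum>I\<in>B - {K}. axis (a0 I) (1::real)) = (\<Sum>I\<in>B - {K}. axis (a1 I) 1)"
        by (rule sum.cong) (auto simp: a1_def)
      have "axis (a0 K) (1::real) = axis (a1 K) 1"
        using eq r by (simp add: sum.remove[OF fin K])
      then have "a0 K = w" by (simp add: axis_eq_axis a1_def)
      then show False using w by simp
    qed
    then show "(\<forall>v. f v \<ge> 1) \<and> (\<forall>K\<in>B. smax K f)" using f1 by simp
  next
    assume h: "(\<forall>v. f v \<ge> 1) \<and> (\<forall>K\<in>B. smax K f)"
    then obtain a where a: "\<forall>I\<in>B. a I \<in> I \<and> (\<forall>w\<in>I. w \<noteq> a I \<longrightarrow> f w < f (a I))"
      unfolding smax_def by metis
    have a': "\<forall>I\<in>B. a I \<in> I \<and> (\<forall>v\<in>I. f v \<le> f (a I))"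
      using a by (metis less_imp_le order_refl)
    let ?x = "\<Sum>I\<in>B. axis (a I) (1::real)"
    have px: "?P ?x" using maxpt[OF fin a'] by blast
    have uniq: "y = ?x" if py: "?P y" for y
    proof -
      obtain s where y: "y = sum s B" and s: "\<forall>I\<in>B. s I \<in> convex hull ((\<lambda>i. axis i 1) ` I)"
        using py unfolding nesto_eq[OF fin] by auto
      have sT: "\<forall>I\<in>B. s I \<in> simpT I" using s simplex_sub by blast
      have le: "\<forall>I\<in>B. Lf f (s I) \<le> real (f (a I))"
        using sT a' by (auto intro: simp_bound)
      have "Lf f ?x \<le> Lf f y" using py px by blast
      then have "(\<Sum>I\<in>B. real (f (a I))) \<le> (\<Sum>I\<in>B. Lf f (s I))"
        using maxpt(2)[OF fin a'] by (simp add: y Lf_sum)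
      then have "\<forall>I\<in>B. Lf f (s I) = real (f (a I))"
        using sum_le_eq[OF fin le] by blast
      then have "\<forall>I\<in>B. s I = axis (a I) 1"
        using sT a by (auto intro!: simp_eq)
      then show ?thesis by (simp add: y)
    qed
    have "\<exists>!x. ?P x" using px uniq by blast
    then show "generic ?Q f" using gen h by simp
  qed
qed

definition Pset :: "'a set set \<Rightarrow> nat list \<Rightarrow> ('a \<Rightarrow> nat) set" where
  "Pset B \<alpha> = {p. (\<forall>v. p v < length \<alpha>) \<and> (\<forall>j<length \<alpha>. card {v. p v = j} = \<alpha> ! j) \<and> (\<forall>K\<in>B. smax K p)}"

definition chainOf :: "nat \<Rightarrow> ('a \<Rightarrow> nat) \<Rightarrow> 'a set list" where
  "chainOf k p = map (\<lambda>j. {v. p v < j}) [0..<Suc k]"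

lemma chainOf_nth: "j \<le> k \<Longrightarrow> chainOf k p ! j = {v. p v < j}"
  unfolding chainOf_def by (simp del: upt_Suc add: nth_map nth_upt)

lemma chainOf_len: "length (chainOf k p) = Suc k"
  unfolding chainOf_def by simp

lemma chain_mono:
  assumes "\<forall>j\<in>{1..k}. (Is::'a set list) ! (j - 1) \<subset> Is ! j"
  shows "a \<le> b \<Longrightarrow> b \<le> k \<Longrightarrow> Is ! a \<subseteq> Is ! b"
proof (induction b)
  case 0 then show ?case by simp
next
  case (Suc b)
  show ?case
  proof (cases "a = Suc b")
    case True then show ?thesis by simp
  next
    case False
    then have "Is ! a \<subseteq> Is ! b" using Suc by simp
    moreover have "Is ! b \<subset> Is ! Suc b" using assms Suc.prems by force
    ultimately show ?thesis by blast
  qed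
qed

lemma into_chain:
  fixes B :: "('a::finite) set set"
  assumes bs: "building_set UNIV B" and pos: "\<forall>a\<in>set \<alpha>. a > 0" and p: "p \<in> Pset B \<alpha>"
  shows "splitting_chain UNIV B \<alpha> (chainOf (length \<alpha>) p)"
proof -
  let ?k = "length \<alpha>"
  have pk: "\<forall>v. p v < ?k" and cnt: "\<forall>j<?k. card {v. p v = j} = \<alpha> ! j" and sm: "\<forall>K\<in>B. smax K p"
    using p by (auto simp: Pset_def)
  have step: "chainOf ?k p ! (j - 1) \<subset> chainOf ?k p ! j
          \<and> discrete_bs (chainOf ?k p ! j - chainOf ?k p ! (j - 1)) (contr_bs (chainOf ?k p ! j) (restr_bs B (chainOf ?k p ! j)) (chainOf ?k p ! (j - 1)))
          \<and> card (chainOf ?k p ! j - chainOf ?k p ! (j - 1)) = \<alpha> ! (j - 1)" if j: "j \<in> {1..?k}" for j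
  proof -
    obtain i where ji: "j = Suc i" and ik: "i < ?k" using j by (cases j) auto
    let ?D = "{v. p v < Suc i}" and ?E = "{v. p v < i}"
    have D: "chainOf ?k p ! j = ?D" using ji ik by (simp add: chainOf_nth)
    have E: "chainOf ?k p ! (j - 1) = ?E" using ji ik by (simp add: chainOf_nth)
    have diff: "?D - ?E = {v. p v = i}" by auto
    have ai: "\<alpha> ! i > 0" using pos ik by simp
    have c: "card {v. p v = i} = \<alpha> ! i" using cnt ik by simp
    then have "{v. p v = i} \<noteq> {}" using ai by (metis card.empty less_irrefl)
    then have sub: "?E \<subset> ?D" by auto
    have disc: "contr_bs ?D (restr_bs B ?D) ?E = {{v} |v. v \<in> ?D - ?E}"
    proof (intro set_eqI iffI)
      fix J assume "J \<in> contr_bs ?D (restr_bs B ?D) ?E"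
      then have J: "J \<subseteq> ?D - ?E" "J \<noteq> {}" and "\<exists>I'\<subseteq>?E. J \<union> I' \<in> restr_bs B ?D"
        unfolding contr_bs_def by (auto intro: exI[of _ "{}"])
      then obtain I' where I': "I' \<subseteq> ?E" "J \<union> I' \<in> B" by (auto simp: restr_bs_def)
      obtain v where v: "v \<in> J \<union> I'" "\<forall>w\<in>J \<union> I'. w \<noteq> v \<longrightarrow> p w < p v"
        using sm I' unfolding smax_def by blast
      obtain u where u: "u \<in> J" using J by auto
      have pu: "p u = i" using u J by auto
      have "v \<in> J"
      proof (rule ccontr)
        assume "v \<notin> J"
        then have "p v < i" using v I' by auto
        moreover have "p u < p v" using v u \<open>v \<notin> J\<close> by auto
        ultimately show False using pu by simp
      qed
      have "J = {v}"
      proof (intro set_eqI iffI)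
        fix x assume "x \<in> J"
        have px: "p x = i" using \<open>x \<in> J\<close> J by auto
        have pv: "p v = i" using \<open>v \<in> J\<close> J by auto
        show "x \<in> {v}"
        proof (rule ccontr)
          assume "x \<notin> {v}"
          then have "p x < p v" using v \<open>x \<in> J\<close> by auto
          then show False using px pv by simp
        qed
      qed (use \<open>v \<in> J\<close> in auto)
      then show "J \<in> {{v} |v. v \<in> ?D - ?E}" using \<open>v \<in> J\<close> J by auto
    next
      fix J assume "J \<in> {{v} |v. v \<in> ?D - ?E}"
      then obtain v where "J = {v}" "v \<in> ?D - ?E" by auto
      moreover have "{v} \<in> B" using bs by (simp add: building_set_def)
      ultimately show "J \<in> contr_bs ?D (restr_bs B ?D) ?E"
        unfolding contr_bs_def restr_bs_def by auto
    qed
    show ?thesis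
      unfolding D E discrete_bs_def using sub disc c diff ji by simp
  qed
  show ?thesis
    unfolding splitting_chain_def
    using step pk by (simp add: chainOf_len chainOf_nth)
qed

lemma from_chain:
  fixes B :: "('a::finite) set set"
  assumes bs: "building_set UNIV B" and sc: "splitting_chain UNIV B \<alpha> Is"
  shows "\<exists>p\<in>Pset B \<alpha>. Is = chainOf (length \<alpha>) p"
proof -
  let ?k = "length \<alpha>"
  have len: "length Is = Suc ?k" and I0: "Is ! 0 = {}" and Ik: "Is ! ?k = UNIV"
    and st: "\<forall>j\<in>{1..?k}. Is ! (j - 1) \<subset> Is ! j
          \<and> discrete_bs (Is ! j - Is ! (j - 1)) (contr_bs (Is ! j) (restr_bs B (Is ! j)) (Is ! (j - 1)))
          \<and> card (Is ! j - Is ! (j - 1)) = \<alpha> ! (j - 1)"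
    using sc unfolding splitting_chain_def by auto
  have mono: "\<And>a b. a \<le> b \<Longrightarrow> b \<le> ?k \<Longrightarrow> Is ! a \<subseteq> Is ! b"
    using chain_mono st by blast
  have kpos: "?k > 0"
  proof (rule ccontr)
    assume "\<not> ?k > 0" then have "?k = 0" by simp
    then show False using I0 Ik by simp
  qed
  define p where "p v = (LEAST j. v \<in> Is ! Suc j)" for v
  have ex: "\<exists>j. v \<in> Is ! Suc j" for v
    using Ik kpos by (intro exI[of _ "?k - 1"]) simp
  have pin: "v \<in> Is ! Suc (p v)" for v
    unfolding p_def by (rule LeastI_ex[OF ex])
  have mem: "v \<in> Is ! j \<longleftrightarrow> p v < j" if "j \<le> ?k" for v j
  proof
    assume "v \<in> Is ! j"
    then obtain j' where j': "j = Suc j'" using I0 by (cases j) auto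
    then have "p v \<le> j'" unfolding p_def using \<open>v \<in> Is ! j\<close> by (intro Least_le) simp
    then show "p v < j" using j' by simp
  next
    assume "p v < j"
    then show "v \<in> Is ! j" using mono[of "Suc (p v)" j] that pin by auto
  qed
  have pk: "\<forall>v. p v < ?k" using mem[of ?k] Ik by auto
  have eq: "Is = chainOf ?k p"
  proof (rule nth_equalityI)
    show "length Is = length (chainOf ?k p)" using len by (simp add: chainOf_len)
    fix j assume "j < length Is"
    then have "j \<le> ?k" using len by simp
    then show "Is ! j = chainOf ?k p ! j" using mem by (auto simp: chainOf_nth)
  qed
  have cnt: "\<forall>j<?k. card {v. p v = j} = \<alpha> ! j"
  proof (intro allI impI)
    fix j assume j: "j < ?k"
    have "{v. p v = j} = Is ! Suc j - Is ! j" using mem[of "Suc j"] mem[of j] j by auto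
    moreover have "Suc j \<in> {1..?k}" using j by simp
    ultimately show "card {v. p v = j} = \<alpha> ! j" using st by fastforce
  qed
  have sm: "\<forall>K\<in>B. smax K p"
  proof
    fix K assume K: "K \<in> B"
    have Kne: "K \<noteq> {}" using bs K by (simp add: building_set_def)
    define j0 where "j0 = (LEAST j. K \<subseteq> Is ! j)"
    have exK: "K \<subseteq> Is ! ?k" using Ik by simp
    have Kj0: "K \<subseteq> Is ! j0" unfolding j0_def by (rule LeastI[of _ ?k]) (rule exK)
    have j0k: "j0 \<le> ?k" unfolding j0_def by (rule Least_le) (rule exK)
    obtain i where ji: "j0 = Suc i" using Kj0 I0 Kne by (cases j0) auto
    have nK: "\<not> K \<subseteq> Is ! i" unfolding j0_def
      using ji j0_def not_less_Least[of i "\<lambda>j. K \<subseteq> Is ! j"] by simp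
    let ?J = "K - Is ! i"
    have Jne: "?J \<noteq> {}" using nK by auto
    have Jsub: "?J \<subseteq> Is ! Suc i - Is ! i" using Kj0 ji by auto
    have "?J \<union> (K \<inter> Is ! i) \<in> restr_bs B (Is ! Suc i)"
      using K Kj0 ji by (simp add: restr_bs_def Un_Diff_Int)
    then have "?J \<in> contr_bs (Is ! Suc i) (restr_bs B (Is ! Suc i)) (Is ! i)"
      using Jne Jsub unfolding contr_bs_def by blast
    moreover have "Suc i \<in> {1..?k}" using j0k ji by simp
    ultimately have "?J \<in> {{v} |v. v \<in> Is ! Suc i - Is ! i}"
      using st unfolding discrete_bs_def by fastforce
    then obtain v where v: "?J = {v}" "v \<in> Is ! Suc i - Is ! i" by auto
    have ik: "Suc i \<le> ?k" using j0k ji by simp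
    have pv: "p v = i" using v mem[of "Suc i" v] mem[of i v] ik by auto
    show "smax K p" unfolding smax_def
    proof (intro bexI ballI impI)
      show "v \<in> K" using v by auto
      fix w assume "w \<in> K" "w \<noteq> v"
      then have "w \<in> Is ! i" using v by auto
      then show "p w < p v" using mem[of i w] ik pv by simp
    qed
  qed
  show ?thesis using pk cnt sm eq by (auto simp: Pset_def)
qed

lemma zeta_eq:
  fixes B :: "('a::finite) set set"
  assumes bs: "building_set UNIV B" and pos: "\<forall>a\<in>set \<alpha>. a > 0"
  shows "zeta UNIV B \<alpha> = card (Pset B \<alpha>)"
proof -
  let ?k = "length \<alpha>"
  have "bij_betw (chainOf ?k) (Pset B \<alpha>) {Is. splitting_chain UNIV B \<alpha> Is}"
    unfolding bij_betw_def
  proof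
    show "inj_on (chainOf ?k) (Pset B \<alpha>)"
    proof (rule inj_onI)
      fix p q assume p: "p \<in> Pset B \<alpha>" and q: "q \<in> Pset B \<alpha>" and e: "chainOf ?k p = chainOf ?k q"
      show "p = q"
      proof
        fix v
        have pv: "p v < ?k" and qv: "q v < ?k" using p q by (auto simp: Pset_def)
        have "chainOf ?k p ! Suc (p v) = chainOf ?k q ! Suc (p v)" using e by simp
        then have "q v < Suc (p v)" using pv by (auto simp: chainOf_nth)
        moreover have "chainOf ?k p ! Suc (q v) = chainOf ?k q ! Suc (q v)" using e by simp
        then have "p v < Suc (q v)" using qv by (auto simp: chainOf_nth)
        ultimately show "p v = q v" by simp
      qed
    qed
    show "chainOf ?k ` Pset B \<alpha> = {Is. splitting_chain UNIV B \<alpha> Is}"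
      using into_chain[OF bs pos] from_chain[OF bs] by blast
  qed
  then show ?thesis unfolding zeta_def by (simp add: bij_betw_same_card)
qed

lemma len_le_sum: "\<forall>a\<in>set xs. (a::nat) > 0 \<Longrightarrow> length xs \<le> sum_list xs"
  by (induction xs) auto

lemma finite_comp: "finite (compositions n)"
proof (rule finite_subset[OF _ finite_lists_length_le[of "{..n}" n]])
  show "compositions n \<subseteq> {xs. set xs \<subseteq> {..n} \<and> length xs \<le> n}"
    unfolding compositions_def using len_le_sum member_le_sum_list by fastforce
qed simp

definition Wit :: "nat list \<Rightarrow> (nat \<Rightarrow> nat) \<Rightarrow> nat list \<Rightarrow> bool" where
  "Wit \<alpha> m idx \<longleftrightarrow> sorted_wrt (<) idx \<and> length idx = length \<alpha>
        \<and> (\<forall>j<length \<alpha>. idx ! j \<ge> 1 \<and> m (idx ! j) = \<alpha> ! j)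
        \<and> (\<forall>i. i \<notin> set idx \<longrightarrow> m i = 0)"

lemma mq_iff: "monomial_qsym \<alpha> m = (if \<exists>idx. Wit \<alpha> m idx then 1 else 0)"
  unfolding monomial_qsym_def Wit_def by simp

lemma wit_strict:
  assumes "sorted_wrt (<) (idx::nat list)" "a < length idx" "b < length idx"
  shows "idx ! a < idx ! b \<longleftrightarrow> a < b"
proof
  assume h: "idx ! a < idx ! b"
  show "a < b"
  proof (rule ccontr)
    assume "\<not> a < b"
    then have "b < a \<or> b = a" by auto
    then show False using h sorted_wrt_nth_less[OF assms(1), of b a] assms by auto
  qed
qed (use sorted_wrt_nth_less[OF assms(1)] assms in auto)

lemma wit_uniq:
  assumes a: "\<alpha> \<in> compositions n" and b: "\<beta> \<in> compositions n"
    and wa: "Wit \<alpha> m ia" and wb: "Wit \<beta> m ib"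
  shows "\<alpha> = \<beta>"
proof -
  have setI: "set idx = {i. m i \<noteq> 0}" if "\<gamma> \<in> compositions n" "Wit \<gamma> m idx" for \<gamma> idx
  proof (intro set_eqI iffI)
    fix i assume "i \<in> set idx"
    then obtain j where j: "j < length idx" "idx ! j = i" by (auto simp: in_set_conv_nth)
    then have "m i = \<gamma> ! j" "j < length \<gamma>" using that by (auto simp: Wit_def)
    moreover have "\<gamma> ! j > 0" using that \<open>j < length \<gamma>\<close> nth_mem by (auto simp: compositions_def)
    ultimately show "i \<in> {i. m i \<noteq> 0}" by simp
  next
    fix i assume "i \<in> {i. m i \<noteq> 0}"
    then show "i \<in> set idx" using that by (auto simp: Wit_def)
  qed
  have "ia = ib"
    using setI[OF a wa] setI[OF b wb] wa wb by (intro strict_sorted_equal) (auto simp: Wit_def)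
  have mapI: "\<gamma> = map m idx" if "Wit \<gamma> m idx" for \<gamma> idx
    using that by (intro nth_equalityI) (auto simp: Wit_def)
  show ?thesis using mapI[OF wa] mapI[OF wb] \<open>ia = ib\<close> by simp
qed

lemma smax_transfer:
  assumes "\<forall>a b. a < k \<longrightarrow> b < k \<longrightarrow> ((g::nat\<Rightarrow>nat) a < g b \<longleftrightarrow> a < b)" "\<forall>v. p v < k"
  shows "smax K (\<lambda>v. g (p v)) \<longleftrightarrow> smax K p"
  unfolding smax_def using assms by auto

lemma card_X:
  fixes B :: "('a::finite) set set"
  assumes bs: "building_set UNIV B" and a: "\<alpha> \<in> compositions n" and w: "Wit \<alpha> m idx"
  shows "card {f. generic (nestohedron B) f \<and> (\<forall>i. card {v. f v = i} = m i)} = card (Pset B \<alpha>)"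
proof -
  let ?k = "length \<alpha>"
  let ?X = "{f. generic (nestohedron B) f \<and> (\<forall>i. card {v. f v = i} = m i)}"
  have so: "sorted_wrt (<) idx" and li: "length idx = ?k"
    and ge: "\<forall>j<?k. idx ! j \<ge> 1 \<and> m (idx ! j) = \<alpha> ! j" and out: "\<forall>i. i \<notin> set idx \<longrightarrow> m i = 0"
    using w by (auto simp: Wit_def)
  have str: "\<forall>a b. a < ?k \<longrightarrow> b < ?k \<longrightarrow> (idx ! a < idx ! b \<longleftrightarrow> a < b)"
    using wit_strict[OF so] li by simp
  have injx: "idx ! a = idx ! b \<longleftrightarrow> a = b" if "a < ?k" "b < ?k" for a b
  proof
    assume e: "idx ! a = idx ! b"
    show "a = b"
    proof (rule ccontr)
      assume "a \<noteq> b"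
      then have "a < b \<or> b < a" by arith
      moreover have "(idx!a < idx!b) = (a<b)" "(idx!b < idx!a) = (b<a)" using str that by auto
      ultimately show False using e by auto
    qed
  qed simp
  let ?h = "\<lambda>p v. idx ! (p v)"
  have "bij_betw ?h (Pset B \<alpha>) ?X"
    unfolding bij_betw_def
  proof (intro conjI)
    show "inj_on ?h (Pset B \<alpha>)"
    proof (rule inj_onI)
      fix p q assume "p \<in> Pset B \<alpha>" "q \<in> Pset B \<alpha>" "?h p = ?h q"
      then show "p = q"
      proof -
        assume p: "p \<in> Pset B \<alpha>" and q: "q \<in> Pset B \<alpha>" and e: "?h p = ?h q"
        show "p = q"
        proof
          fix v
          have "p v < ?k" "q v < ?k" using p q by (auto simp: Pset_def)
          moreover have "idx ! p v = idx ! q v" using e by (simp add: fun_eq_iff)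
          ultimately show "p v = q v" using injx by blast
        qed
      qed
    qed
    show "?h ` Pset B \<alpha> = ?X"
    proof (intro set_eqI iffI)
      fix f assume "f \<in> ?h ` Pset B \<alpha>"
      then obtain p where p: "p \<in> Pset B \<alpha>" and f: "f = ?h p" by auto
      have pk: "\<forall>v. p v < ?k" and cnt: "\<forall>j<?k. card {v. p v = j} = \<alpha> ! j" and sm: "\<forall>K\<in>B. smax K p"
        using p by (auto simp: Pset_def)
      have f1: "\<forall>v. f v \<ge> 1" using f pk ge by simp
      have fsm: "\<forall>K\<in>B. smax K f" using sm smax_transfer[OF str pk] f by simp
      have fc: "card {v. f v = i} = m i" for i
      proof (cases "i \<in> set idx")
        case True
        then obtain j where j: "j < ?k" "idx ! j = i" using li by (auto simp: in_set_conv_nth)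
        have "{v. f v = i} = {v. p v = j}" using f j injx pk by auto
        then show ?thesis using cnt j ge by auto
      next
        case False
        have "f v \<noteq> i" for v
        proof -
          have "f v \<in> set idx" using f pk li by (simp add: nth_mem)
          then show ?thesis using False by auto
        qed
        then have "{v. f v = i} = {}" by auto
        then show ?thesis using out False by simp
      qed
      show "f \<in> ?X" using gen_iff[OF bs] f1 fsm fc by simp
    next
      fix f assume "f \<in> ?X"
      then have g: "generic (nestohedron B) f" and fc: "\<forall>i. card {v. f v = i} = m i" by auto
      have f1: "\<forall>v. f v \<ge> 1" and fsm: "\<forall>K\<in>B. smax K f" using g gen_iff[OF bs] by auto
      have ex: "\<exists>j. j < ?k \<and> idx ! j = f v" for v
      proof -
        have "card {w. f w = f v} > 0" by (rule card_gt_0_iff[THEN iffD2]) auto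
        then have "m (f v) \<noteq> 0" using fc by simp
        then have "f v \<in> set idx" using out[rule_format, of "f v"] by (cases "f v \<in> set idx") simp_all
        then show ?thesis using li by (auto simp: in_set_conv_nth)
      qed
      define p where "p v = (SOME j. j < ?k \<and> idx ! j = f v)" for v
      have pp: "p v < ?k \<and> idx ! (p v) = f v" for v
        unfolding p_def by (rule someI_ex[OF ex])
      have fh: "f = ?h p" using pp by (simp add: fun_eq_iff)
      have pk: "\<forall>v. p v < ?k" using pp by simp
      have cnt: "\<forall>j<?k. card {v. p v = j} = \<alpha> ! j"
      proof (intro allI impI)
        fix j assume j: "j < ?k"
        have "{v. p v = j} = {v. f v = idx ! j}"
        proof (intro set_eqI iffI; simp)
          fix v assume "p v = j" then show "f v = idx ! j" using pp[of v] by simp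
        next
          fix v assume "f v = idx ! j" then have "idx ! p v = idx ! j" using pp[of v] by simp
          then show "p v = j" using injx[of "p v" j] pk j by blast
        qed
        then show "card {v. p v = j} = \<alpha> ! j" using fc ge j by simp
      qed
      have sm: "\<forall>K\<in>B. smax K p" using fsm smax_transfer[OF str pk] fh by simp
      have "p \<in> Pset B \<alpha>" using pk cnt sm by (simp add: Pset_def)
      then show "f \<in> ?h ` Pset B \<alpha>" unfolding fh by (rule imageI)
    qed
  qed
  then show ?thesis by (simp add: bij_betw_same_card)
qed

lemma exists_wit:
  fixes B :: "('a::finite) set set"
  assumes bs: "building_set UNIV B" and g: "generic (nestohedron B) f" and fc: "\<forall>i. card {v. f v = i} = m i"
  shows "\<exists>\<alpha>\<in>compositions CARD('a). \<exists>idx. Wit \<alpha> m idx"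
proof -
  have f1: "\<forall>v. f v \<ge> 1" using g gen_iff[OF bs] by auto
  let ?S = "range f"
  have finS: "finite ?S" by simp
  define idx where "idx = sorted_list_of_set ?S"
  define \<alpha> where "\<alpha> = map m idx"
  have setidx: "set idx = ?S" unfolding idx_def using finS by simp
  have so: "sorted_wrt (<) idx" unfolding idx_def by (rule strict_sorted_list_of_set)
  have dist: "distinct idx" unfolding idx_def by simp
  have mpos: "m i > 0" if iS: "i \<in> ?S" for i
  proof -
    obtain v where "i = f v" using iS by blast
    then have "card {w. f w = i} > 0" by (intro card_gt_0_iff[THEN iffD2]) auto
    then show ?thesis using fc by simp
  qed
  have W: "Wit \<alpha> m idx"
    unfolding Wit_def
  proof (intro conjI allI impI)
    show "sorted_wrt (<) idx" by (rule so)
    show "length idx = length \<alpha>" by (simp add: \<alpha>_def)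
    fix j assume j: "j < length \<alpha>"
    then have "idx ! j \<in> ?S" using setidx nth_mem by (metis \<alpha>_def length_map)
    then show "1 \<le> idx ! j" using f1 by auto
    show "m (idx ! j) = \<alpha> ! j" using j by (simp add: \<alpha>_def)
  next
    fix i assume "i \<notin> set idx"
    then have "{v. f v = i} = {}" using setidx by auto
    then show "m i = 0" using fc by (metis card.empty)
  qed
  have pos: "\<forall>a\<in>set \<alpha>. a > 0" using mpos setidx by (auto simp: \<alpha>_def)
  have "sum_list \<alpha> = (\<Sum>i\<in>?S. m i)"
    unfolding \<alpha>_def using dist setidx by (simp add: sum_list_distinct_conv_sum_set)
  also have "\<dots> = (\<Sum>i\<in>?S. card {v. f v = i})" using fc by simp
  also have "\<dots> = card (\<Union>i\<in>?S. {v. f v = i})"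
    by (rule card_UN_disjoint[symmetric]) auto
  also have "(\<Union>i\<in>?S. {v. f v = i}) = UNIV" by auto
  finally have "sum_list \<alpha> = CARD('a)" .
  then have "\<alpha> \<in> compositions CARD('a)" using pos by (simp add: compositions_def)
  then show ?thesis using W by blast
qed

theorem mainTheorem2:
  fixes B :: "('a::finite) set set"
  assumes "building_set UNIV B" and "connected_bs UNIV B"
  shows "F_series (nestohedron B) =
           (\<lambda>m. \<Sum>\<alpha>\<in>compositions CARD('a). zeta UNIV B \<alpha> * monomial_qsym \<alpha> m)"
proof
  fix m
  note bs = assms(1)
  let ?C = "compositions CARD('a)"
  let ?X = "{f. generic (nestohedron B) f \<and> (\<forall>i. card {v. f v = i} = m i)}"
  have F: "F_series (nestohedron B) m = card ?X" by (simp add: F_series_def)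
  show "F_series (nestohedron B) m = (\<Sum>\<alpha>\<in>?C. zeta UNIV B \<alpha> * monomial_qsym \<alpha> m)"
  proof (cases "\<exists>\<alpha>\<in>?C. \<exists>idx. Wit \<alpha> m idx")
    case True
    then obtain \<alpha>0 idx where a0: "\<alpha>0 \<in> ?C" and w0: "Wit \<alpha>0 m idx" by blast
    have zero: "\<forall>\<beta>\<in>?C - {\<alpha>0}. zeta UNIV B \<beta> * monomial_qsym \<beta> m = 0"
    proof
      fix \<beta> assume b: "\<beta> \<in> ?C - {\<alpha>0}"
      have "\<not> (\<exists>idx. Wit \<beta> m idx)"
      proof
        assume "\<exists>idx. Wit \<beta> m idx"
        then obtain ib where "Wit \<beta> m ib" by blast
        then have "\<beta> = \<alpha>0" using wit_uniq[OF _ a0 _ w0] b by blast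
        then show False using b by simp
      qed
      then show "zeta UNIV B \<beta> * monomial_qsym \<beta> m = 0" by (simp add: mq_iff)
    qed
    have "(\<Sum>\<alpha>\<in>?C. zeta UNIV B \<alpha> * monomial_qsym \<alpha> m)
        = zeta UNIV B \<alpha>0 * monomial_qsym \<alpha>0 m + (\<Sum>\<alpha>\<in>?C - {\<alpha>0}. zeta UNIV B \<alpha> * monomial_qsym \<alpha> m)"
      by (rule sum.remove[OF finite_comp a0])
    also have "\<dots> = zeta UNIV B \<alpha>0"
    proof -
      have "monomial_qsym \<alpha>0 m = 1" using w0 by (auto simp: mq_iff)
      moreover have "(\<Sum>\<alpha>\<in>?C - {\<alpha>0}. zeta UNIV B \<alpha> * monomial_qsym \<alpha> m) = 0"
        using zero by (intro sum.neutral) blast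
      ultimately show ?thesis by simp
    qed
    also have "\<dots> = card (Pset B \<alpha>0)"
      using a0 by (intro zeta_eq[OF bs]) (simp add: compositions_def)
    also have "\<dots> = card ?X" using card_X[OF bs a0 w0] by simp
    finally show ?thesis using F by simp
  next
    case False
    then have "\<forall>\<alpha>\<in>?C. zeta UNIV B \<alpha> * monomial_qsym \<alpha> m = 0" by (simp add: mq_iff)
    then have s0: "(\<Sum>\<alpha>\<in>?C. zeta UNIV B \<alpha> * monomial_qsym \<alpha> m) = 0"
      by (intro sum.neutral) blast
    have X0: "?X = {}" using exists_wit[OF bs] False by blast
    show ?thesis unfolding F X0 s0 by simp
  qed
qed

end
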